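(* Let $n\ge 1$ and $0\le t<n$ be integers, and write $n=(n-t)q+r$ where $q,r$ are the unique integers with $0\le r<n-t$. Then \[ S(n,t,2)=q^{\,n-t-r}(q+1)^r. \]
   Context: A CNF formula over variables $x_1,\dots,x_n$ is a conjunction of clauses (disjunctions of literals); a $k$-CNF has all clauses of width at most $k$. $\mathrm{sat}_t(F)$ denotes the set of satisfying assignments of $F$ of Hamming weight exactly $t$. $F$ is $t$-admissible if it has no satisfying assignment of Hamming weight less than $t$. $S(n,t,k)$ is the maximum of $|\mathrm{sat}_t(F)|$ over all $t$-admissible $k$-CNF formulas $F$ on $n$ variables. *)

theory Defs
  imports Main
begin

text \<open>Variables are x_0,...,x_{n-1} (indices in {0..<n}). A literal is a pair (i, b):
  (i, True) is the positive literal x_i, (i, False) the negative literal.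
  An assignment is identified with the set of variables it sets to true; its Hamming weight
  is the cardinality of that set.\<close>

type_synonym literal = "nat \<times> bool"
type_synonym clause = "literal set"
type_synonym cnf = "clause set"

definition lit_sat :: "nat set \<Rightarrow> literal \<Rightarrow> bool" where
  "lit_sat A l = (if snd l then fst l \<in> A else fst l \<notin> A)"

definition clause_sat :: "nat set \<Rightarrow> clause \<Rightarrow> bool" where
  "clause_sat A C = (\<exists>l\<in>C. lit_sat A l)"

definition cnf_sat :: "nat set \<Rightarrow> cnf \<Rightarrow> bool" where
  "cnf_sat A F = (\<forall>C\<in>F. clause_sat A C)"

definition is_kcnf :: "nat \<Rightarrow> nat \<Rightarrow> cnf \<Rightarrow> bool" where
  "is_kcnf n k F = (\<forall>C\<in>F. fst ` C \<subseteq> {0..<n} \<and> finite C \<and> card C \<le> k)"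

definition sat_t :: "nat \<Rightarrow> nat \<Rightarrow> cnf \<Rightarrow> nat set set" where
  "sat_t n t F = {A. A \<subseteq> {0..<n} \<and> card A = t \<and> cnf_sat A F}"

definition admissible :: "nat \<Rightarrow> nat \<Rightarrow> cnf \<Rightarrow> bool" where
  "admissible n t F = (\<forall>A. A \<subseteq> {0..<n} \<and> card A < t \<longrightarrow> \<not> cnf_sat A F)"

definition S :: "nat \<Rightarrow> nat \<Rightarrow> nat \<Rightarrow> nat" where
  "S n t k = Max {card (sat_t n t F) | F. is_kcnf n k F \<and> admissible n t F}"

end

theory Submission
  imports Defs "HOL-Library.FuncSet"
begin

definition fq :: "nat \<Rightarrow> nat \<Rightarrow> nat" where
  "fq n m = (n div m) ^ (m - n mod m) * (n div m + 1) ^ (n mod m)"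

lemma fq_eq: assumes "r < m" shows "fq (q*m + r) m = q^(m-r) * (q+1)^r"
proof -
  have "m > 0" using assms by simp
  then have "(q*m+r) div m = q" "(q*m+r) mod m = r" using assms by simp_all
  thus ?thesis unfolding fq_def by simp
qed

lemma fq_mono_Suc: assumes "m > 0" shows "fq n m \<le> fq (Suc n) m"
proof -
  define q r where "q = n div m" and "r = n mod m"
  have n: "n = q*m + r" and rm: "r < m" using assms by (simp_all add: q_def r_def)
  show ?thesis
  proof (cases "Suc r < m")
    case True
    have e1: "fq (Suc n) m = q^(m - Suc r) * (q+1)^(Suc r)"
      using fq_eq[OF True, of q] n by simp
    have e2: "fq n m = q^(m-r)*(q+1)^r" using fq_eq[OF rm] n by simp
    have e3: "m - r = Suc (m - Suc r)" using True by simp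
    have "q * (q+1)^r \<le> (q+1)*(q+1)^r" by simp
    hence "q^(m - Suc r) * (q * (q+1)^r) \<le> q^(m - Suc r) * ((q+1)*(q+1)^r)" by (rule mult_le_mono2)
    thus ?thesis unfolding e1 e2 e3 by (simp add: algebra_simps)
  next
    case False
    hence r: "r = m - 1" using rm by simp
    have e1: "fq (Suc n) m = (q+1)^m" using fq_eq[of 0 m "q+1"] assms n r by (simp add: algebra_simps)
    have e2: "fq n m = q*(q+1)^(m-1)" using fq_eq[OF rm, of q] n r assms by simp
    have e3: "m = Suc (m-1)" using assms by simp
    have "q*(q+1)^(m-1) \<le> (q+1)*(q+1)^(m-1)" by simp
    also have "\<dots> = (q+1)^m" by (subst (2) e3) simp
    finally show ?thesis unfolding e1 e2 .
  qed
qed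

lemma fq_mono: assumes "m > 0" "n \<le> n'" shows "fq n m \<le> fq n' m"
  using assms(2)
proof (induction rule: dec_induct)
  case base thus ?case by simp
next
  case (step k) thus ?case using fq_mono_Suc[OF assms(1), of k] by simp
qed

lemma fq_rec:
  assumes m2: "2 \<le> m" and n1: "1 \<le> n" and dn: "d \<le> n" and key: "n \<le> m*(n-d)"
  shows "fq (n-1) m + fq d (m-1) \<le> fq n m"
proof -
  define q r where "q = n div m" and "r = n mod m"
  have n: "n = q*m + r" and rm: "r < m" using m2 by (simp_all add: q_def r_def)
  have qm: "q*m = q*(m-1)+q" using m2 by (cases m) auto
  show ?thesis
  proof (cases "r = 0")
    case False
    have a: "n - 1 = q*m + (r-1)" using n False by simp
    have b: "fq (n-1) m = q^(Suc (m-r))*(q+1)^(r-1)"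
      using fq_eq[of "r-1" m q] a rm False by (simp add: Suc_diff_le)
    have "m*q < m*(n-d)" using key n False by (simp add: algebra_simps)
    hence "q < n - d" by simp
    hence c: "d \<le> q*(m-1) + (r-1)" using n qm False by linarith
    have "fq d (m-1) \<le> fq (q*(m-1) + (r-1)) (m-1)" using fq_mono[OF _ c] m2 by simp
    also have "\<dots> = q^(m-r) * (q+1)^(r-1)" using fq_eq[of "r-1" "m-1" q] rm False by simp
    finally have d: "fq d (m-1) \<le> q^(m-r) * (q+1)^(r-1)" .
    have e: "fq n m = q^(m-r)*(q+1)^r" using fq_eq[OF rm] n by simp
    have "q^(Suc (m-r))*(q+1)^(r-1) + q^(m-r) * (q+1)^(r-1) = q^(m-r)*(q+1)^(Suc (r-1))"
      by (simp add: algebra_simps)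
    also have "\<dots> = fq n m" using e False by simp
    finally show ?thesis using b d by linarith
  next
    case True
    have q1: "q \<ge> 1" using n True n1 by (cases q) auto
    have a: "n - 1 = (q-1)*m + (m-1)" using n True q1 m2 by (cases q) (auto simp: algebra_simps)
    have b: "fq (n-1) m = (q-1)*q^(m-1)"
      using fq_eq[of "m-1" m "q-1"] a m2 q1 by simp
    have "m*q \<le> m*(n-d)" using key n True by (simp add: algebra_simps)
    hence "q \<le> n - d" using m2 by simp
    hence c: "d \<le> q*(m-1) + 0" using n qm True dn by linarith
    have "fq d (m-1) \<le> fq (q*(m-1) + 0) (m-1)" using fq_mono[OF _ c] m2 by simp
    also have "\<dots> = q^(m-1)" using fq_eq[of 0 "m-1" q] m2 by simp
    finally have d: "fq d (m-1) \<le> q^(m-1)" .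
    have e: "fq n m = q^m" using fq_eq[OF rm] n True by simp
    have "(q-1)*q^(m-1) + q^(m-1) = q * q^(m-1)" using q1 by (cases q) auto
    also have "\<dots> = q^m" using m2 by (cases m) auto
    finally show ?thesis using b d e by linarith
  qed
qed

definition clq :: "'a set \<Rightarrow> ('a \<Rightarrow> 'a \<Rightarrow> bool) \<Rightarrow> 'a set \<Rightarrow> bool" where
  "clq V adj K \<longleftrightarrow> K \<subseteq> V \<and> (\<forall>x\<in>K. \<forall>y\<in>K. x \<noteq> y \<longrightarrow> adj x y)"

lemma mindeg:
  assumes fin: "finite V" and ne: "V \<noteq> {}" and m: "1 \<le> m"
    and sym: "\<And>x y. adj x y \<Longrightarrow> adj y x" and irr: "\<And>x. \<not> adj x x"
    and bnd: "\<And>K. clq V adj K \<Longrightarrow> card K \<le> m"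
  shows "\<exists>v\<in>V. card V \<le> m * card {u\<in>V. \<not> adj v u}"
proof (rule ccontr)
  assume "\<not> ?thesis"
  hence H: "\<And>v. v \<in> V \<Longrightarrow> m * card {u\<in>V. \<not> adj v u} < card V" by auto
  have "\<exists>K. clq V adj K \<and> card K = k" if "k \<le> Suc m" for k
    using that
  proof (induction k)
    case 0 show ?case by (rule exI[of _ "{}"]) (simp add: clq_def)
  next
    case (Suc k)
    then obtain K where K: "clq V adj K" "card K = k" by auto
    have finK: "finite K" using K fin by (meson clq_def finite_subset)
    define Nn where "Nn = (\<Union>v\<in>K. {u\<in>V. \<not> adj v u})"
    have "card Nn \<le> (\<Sum>v\<in>K. card {u\<in>V. \<not> adj v u})"
      unfolding Nn_def by (rule card_UN_le[OF finK])
    moreover have "(\<Sum>v\<in>K. card {u\<in>V. \<not> adj v u}) < card V"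
    proof (cases "K = {}")
      case True thus ?thesis using fin ne by (simp add: card_gt_0_iff)
    next
      case False
      have "m * (\<Sum>v\<in>K. card {u\<in>V. \<not> adj v u}) = (\<Sum>v\<in>K. m * card {u\<in>V. \<not> adj v u})"
        by (simp add: sum_distrib_left)
      also have "\<dots> < (\<Sum>v\<in>K. card V)"
        using K(1) H False finK by (intro sum_strict_mono) (auto simp: clq_def)
      also have "\<dots> = k * card V" using K(2) by simp
      also have "\<dots> \<le> m * card V" using Suc.prems by simp
      finally show ?thesis by simp
    qed
    ultimately have lt: "card Nn < card V" by linarith
    have sub: "Nn \<subseteq> V" unfolding Nn_def by auto
    have "\<not> V \<subseteq> Nn"
    proof
      assume "V \<subseteq> Nn"
      hence "card V \<le> card Nn" using card_mono[OF finite_subset[OF sub fin]] by simp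
      thus False using lt by simp
    qed
    then obtain u where u: "u \<in> V" "u \<notin> Nn" by auto
    have uK: "u \<notin> K" using u irr unfolding Nn_def by auto
    have adj: "adj x u" if "x \<in> K" for x using u that unfolding Nn_def by auto
    have "clq V adj (insert u K)" using K(1) u adj sym unfolding clq_def by blast
    moreover have "card (insert u K) = Suc k" using finK uK K(2) by simp
    ultimately show ?case by blast
  qed
  then obtain K where "clq V adj K" "card K = Suc m" by blast
  thus False using bnd by fastforce
qed

lemma CC:
  "finite V \<Longrightarrow> card V = n \<Longrightarrow> (\<And>x y. adj x y \<Longrightarrow> adj y x) \<Longrightarrow> (\<And>x. \<not> adj x x) \<Longrightarrow> 1 \<le> m \<Longrightarrow>
   (\<And>K. clq V adj K \<Longrightarrow> card K \<le> m) \<Longrightarrow> card {K. clq V adj K \<and> card K = m} \<le> fq n m"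
proof (induction n arbitrary: V m rule: less_induct)
  case (less n)
  note fin = less.prems(1) and cV = less.prems(2) and sym = less.prems(3) and irr = less.prems(4)
    and m1 = less.prems(5) and bnd = less.prems(6)
  show ?case
  proof (cases "n = 0")
    case True
    hence "V = {}" using fin cV by simp
    hence e: "{K. clq V adj K \<and> card K = m} = {}" using m1 by (auto simp: clq_def)
    show ?thesis unfolding e by simp
  next
    case n0: False
    show ?thesis
    proof (cases "m = 1")
      case True
      have "{K. clq V adj K \<and> card K = m} \<subseteq> (\<lambda>v. {v}) ` V"
        using True by (auto simp: clq_def card_1_singleton_iff)
      hence "card {K. clq V adj K \<and> card K = m} \<le> card ((\<lambda>v. {v}) ` V)"
        using fin by (intro card_mono) auto
      also have "\<dots> \<le> n" using card_image_le[OF fin, of "\<lambda>v. {v}"] cV by simp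
      finally show ?thesis using True by (simp add: fq_def)
    next
      case False
      hence m2: "2 \<le> m" using m1 by simp
      have ne: "V \<noteq> {}" using n0 cV by auto
      obtain v where v: "v \<in> V" and key: "card V \<le> m * card {u\<in>V. \<not> adj v u}"
        using mindeg[of V m adj, OF fin ne m1 sym irr bnd] by blast
      define N where "N = {u\<in>V. adj v u}"
      define C where "C = {u\<in>V. \<not> adj v u}"
      have finN: "finite N" "finite C" using fin by (auto simp: N_def C_def)
      have "N \<union> C = V" "N \<inter> C = {}" by (auto simp: N_def C_def)
      hence cNC: "card N + card C = n" using card_Un_disjoint[OF finN] cV by simp
      have vC: "v \<in> C" using v irr by (simp add: C_def)
      hence "card C \<ge> 1" using finN(2) by (metis One_nat_def Suc_leI card_gt_0_iff empty_iff)
      hence dn: "card N < n" using cNC by simp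
      have sub: "{K. clq V adj K \<and> card K = m} \<subseteq>
          {K. clq (V - {v}) adj K \<and> card K = m} \<union> insert v ` {K. clq N adj K \<and> card K = m - 1}"
      proof
        fix K assume K: "K \<in> {K. clq V adj K \<and> card K = m}"
        show "K \<in> {K. clq (V - {v}) adj K \<and> card K = m} \<union> insert v ` {K. clq N adj K \<and> card K = m - 1}"
        proof (cases "v \<in> K")
          case False thus ?thesis using K by (auto simp: clq_def)
        next
          case True
          have Kc: "clq V adj K" using K by blast
          have finK: "finite K" using Kc fin by (auto simp: clq_def intro: finite_subset)
          have "clq N adj (K - {v})" using K True by (auto simp: clq_def N_def)
          moreover have "card (K - {v}) = m - 1" using K True finK by simp
          moreover have "K = insert v (K - {v})" using True by auto
          ultimately show ?thesis by blast
        qed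
      qed
      have finA: "finite {K. clq (V - {v}) adj K \<and> card K = m}"
        by (rule finite_subset[of _ "Pow V"]) (auto simp: clq_def fin)
      have finB: "finite {K. clq N adj K \<and> card K = m - 1}"
        by (rule finite_subset[of _ "Pow N"]) (auto simp: clq_def finN)
      have "card {K. clq V adj K \<and> card K = m} \<le>
          card ({K. clq (V - {v}) adj K \<and> card K = m} \<union> insert v ` {K. clq N adj K \<and> card K = m - 1})"
        using finA finB by (intro card_mono[OF _ sub]) auto
      also have "\<dots> \<le> card {K. clq (V - {v}) adj K \<and> card K = m} + card (insert v ` {K. clq N adj K \<and> card K = m - 1})"
        by (rule card_Un_le)
      also have "\<dots> \<le> card {K. clq (V - {v}) adj K \<and> card K = m} + card {K. clq N adj K \<and> card K = m - 1}"
        using card_image_le[OF finB] by simp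
      also have "\<dots> \<le> fq (n-1) m + fq (card N) (m-1)"
      proof (rule add_le_mono)
        show "card {K. clq (V - {v}) adj K \<and> card K = m} \<le> fq (n-1) m"
        proof (rule less.IH[of "n-1" "V - {v}" m])
          show "n - 1 < n" using n0 by simp
          show "finite (V - {v})" using fin by simp
          show "card (V - {v}) = n - 1" using cV v fin by simp
          show "\<And>x y. adj x y \<Longrightarrow> adj y x" by (rule sym)
          show "\<And>x. \<not> adj x x" by (rule irr)
          show "1 \<le> m" by (rule m1)
          fix K assume "clq (V - {v}) adj K"
          hence "clq V adj K" by (auto simp: clq_def)
          thus "card K \<le> m" by (rule bnd)
        qed
        show "card {K. clq N adj K \<and> card K = m - 1} \<le> fq (card N) (m-1)"
        proof (rule less.IH[OF dn finN(1) refl sym irr])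
          show "1 \<le> m - 1" using m2 by simp
          fix K assume K: "clq N adj K"
          have vK: "v \<notin> K" using K irr by (auto simp: clq_def N_def)
          have "clq V adj (insert v K)" using K sym v by (auto simp: clq_def N_def)
          hence "card (insert v K) \<le> m" by (rule bnd)
          moreover have "finite K" using K finN by (meson clq_def finite_subset)
          ultimately show "card K \<le> m - 1" using vK by simp
        qed
      qed
      also have "\<dots> \<le> fq n m"
      proof -
        have "n - card N = card C" using cNC by simp
        thus ?thesis using fq_rec[OF m2, of n "card N"] n0 cNC key cV by (simp add: C_def)
      qed
      finally show ?thesis .
    qed
  qed
qed


definition med :: "nat set \<Rightarrow> nat set \<Rightarrow> nat set \<Rightarrow> nat set" where
  "med A B C = (A \<inter> B) \<union> (A \<inter> C) \<union> (B \<inter> C)"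

lemma med_clause:
  assumes "finite Cl" "card Cl \<le> 2" "clause_sat A Cl" "clause_sat B Cl" "clause_sat C Cl"
  shows "clause_sat (med A B C) Cl"
proof -
  obtain a b c where abc: "a\<in>Cl" "lit_sat A a" "b\<in>Cl" "lit_sat B b" "c\<in>Cl" "lit_sat C c"
    using assms(3-5) by (auto simp: clause_sat_def)
  have "a = b \<or> a = c \<or> b = c"
  proof (rule ccontr)
    assume "\<not> ?thesis"
    hence "card {a,b,c} = 3" by auto
    moreover have "card {a,b,c} \<le> card Cl" using abc assms(1) by (intro card_mono) auto
    ultimately show False using assms(2) by simp
  qed
  thus ?thesis
  proof (elim disjE)
    assume "a = b" thus ?thesis using abc
      by (cases "snd a") (auto simp: clause_sat_def lit_sat_def med_def)
  next
    assume "a = c" thus ?thesis using abc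
      by (cases "snd a") (auto simp: clause_sat_def lit_sat_def med_def)
  next
    assume "b = c" thus ?thesis using abc
      by (cases "snd b") (auto simp: clause_sat_def lit_sat_def med_def)
  qed
qed

lemma helly:
  assumes F2: "\<forall>Cl\<in>F. finite Cl \<and> card Cl \<le> 2"
  shows "finite I \<Longrightarrow> I \<noteq> {} \<Longrightarrow> (\<And>i j. i\<in>I \<Longrightarrow> j\<in>I \<Longrightarrow> \<exists>A. A \<subseteq> X \<and> cnf_sat A F \<and> i \<notin> A \<and> j \<notin> A)
     \<Longrightarrow> \<exists>A. A \<subseteq> X \<and> cnf_sat A F \<and> A \<inter> I = {}"
proof (induction "card I" arbitrary: I rule: less_induct)
  case less
  note fin = less.prems(1) and ne = less.prems(2) and pw = less.prems(3)
  show ?case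
  proof (cases "card I \<le> 2")
    case True
    obtain i j where ij: "I = {i, j}"
    proof -
      have "card I > 0" using ne fin by (simp add: card_gt_0_iff)
      hence "card I = 1 \<or> card I = 2" using True by linarith
      thus ?thesis using that by (auto simp: card_1_singleton_iff card_2_iff)
    qed
    obtain A where "A \<subseteq> X" "cnf_sat A F" "i \<notin> A" "j \<notin> A" using pw[of i j] ij by auto
    thus ?thesis using ij by auto
  next
    case False
    obtain T where T: "T \<subseteq> I" "card T = 3" using False obtain_subset_with_card_n[of 3 I] by auto
    then obtain a b c where abc: "T = {a,b,c}" "a \<noteq> b" "a \<noteq> c" "b \<noteq> c" by (auto simp: card_3_iff)
    have IH: "\<exists>A. A \<subseteq> X \<and> cnf_sat A F \<and> A \<inter> (I - {x}) = {}" if "x \<in> I" "y \<in> I" "x \<noteq> y" for x y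
    proof (rule less.hyps)
      show "card (I - {x}) < card I" using that fin by (meson card_Diff1_less)
      show "finite (I - {x})" using fin by simp
      show "I - {x} \<noteq> {}" using that by auto
      show "\<And>i j. i \<in> I - {x} \<Longrightarrow> j \<in> I - {x} \<Longrightarrow> \<exists>A\<subseteq>X. cnf_sat A F \<and> i \<notin> A \<and> j \<notin> A"
        using pw by auto
    qed
    have inI: "a \<in> I" "b \<in> I" "c \<in> I" using T abc by auto
    obtain A1 where A1: "A1 \<subseteq> X" "cnf_sat A1 F" "A1 \<inter> (I - {a}) = {}" using IH[OF inI(1,2) abc(2)] by auto
    obtain A2 where A2: "A2 \<subseteq> X" "cnf_sat A2 F" "A2 \<inter> (I - {b}) = {}" using IH[OF inI(2,1)] abc(2) by auto
    obtain A3 where A3: "A3 \<subseteq> X" "cnf_sat A3 F" "A3 \<inter> (I - {c}) = {}" using IH[OF inI(3,1)] abc(3) by auto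
    have "med A1 A2 A3 \<subseteq> X" using A1 A2 A3 by (auto simp: med_def)
    moreover have "cnf_sat (med A1 A2 A3) F"
      unfolding cnf_sat_def
    proof
      fix Cl assume "Cl \<in> F"
      thus "clause_sat (med A1 A2 A3) Cl" using F2 A1 A2 A3 med_clause by (auto simp: cnf_sat_def)
    qed
    moreover have "med A1 A2 A3 \<inter> I = {}" using A1 A2 A3 abc by (auto simp: med_def)
    ultimately show ?thesis by blast
  qed
qed



lemma upper:
  assumes tn: "t < n" and kc: "is_kcnf n 2 F" and adm: "admissible n t F"
  shows "card (sat_t n t F) \<le> fq n (n - t)"
proof -
  define m where "m = n - t"
  define adj where "adj i j \<longleftrightarrow> i \<noteq> j \<and> (\<exists>A\<in>sat_t n t F. i \<notin> A \<and> j \<notin> A)" for i j :: nat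
  have F2: "\<forall>Cl\<in>F. finite Cl \<and> card Cl \<le> 2" using kc by (auto simp: is_kcnf_def)
  have bnd: "card K \<le> m" if Kq: "clq {0..<n} adj K" for K
  proof (cases "card K \<le> 1")
    case True thus ?thesis using m_def tn by simp
  next
    case False
    hence finK: "finite K" by (metis card.infinite zero_le)
    have Kne: "K \<noteq> {}" using False by auto
    have pw: "\<exists>A. A \<subseteq> {0..<n} \<and> cnf_sat A F \<and> i \<notin> A \<and> j \<notin> A" if ij: "i\<in>K" "j\<in>K" for i j
    proof -
      obtain k where k: "k \<in> K" "k \<noteq> i"
      proof (rule ccontr)
        assume "\<not> thesis"
        hence "K \<subseteq> {i}" using that by blast
        hence "card K \<le> 1" using card_mono[of "{i}" K] by simp
        thus False using False by simp
      qed
      show ?thesis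
      proof (cases "i = j")
        case ne: False
        have "adj i j" using ij ne Kq by (auto simp: clq_def)
        thus ?thesis by (auto simp: adj_def sat_t_def)
      next
        case True
        have "adj i k" using ij k Kq by (auto simp: clq_def)
        thus ?thesis using True by (auto simp: adj_def sat_t_def)
      qed
    qed
    obtain A where A: "A \<subseteq> {0..<n}" "cnf_sat A F" "A \<inter> K = {}"
      using helly[OF F2 finK Kne, of "{0..<n}"] pw by blast
    have Ksub: "K \<subseteq> {0..<n}" using Kq by (simp add: clq_def)
    have "A \<subseteq> {0..<n} - K" using A by auto
    hence "card A \<le> card ({0..<n} - K)" by (intro card_mono) auto
    also have "\<dots> = n - card K" using Ksub finK by (simp add: card_Diff_subset)
    finally have cA: "card A \<le> n - card K" .
    have "\<not> card A < t" using adm A by (auto simp: admissible_def)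
    moreover have "card K \<le> n" using Ksub card_mono[of "{0..<n}" K] by simp
    ultimately show ?thesis using cA m_def by linarith
  qed
  have CCb: "card {K. clq {0..<n} adj K \<and> card K = m} \<le> fq n m"
  proof (rule CC)
    show "finite {0..<n}" by simp
    show "card {0..<n} = n" by simp
    show "\<And>x y. adj x y \<Longrightarrow> adj y x" by (auto simp: adj_def)
    show "\<And>x. \<not> adj x x" by (simp add: adj_def)
    show "1 \<le> m" using m_def tn by simp
    show "\<And>K. clq {0..<n} adj K \<Longrightarrow> card K \<le> m" by (rule bnd)
  qed
  have "card (sat_t n t F) \<le> card {K. clq {0..<n} adj K \<and> card K = m}"
  proof (rule card_inj_on_le[of "\<lambda>A. {0..<n} - A"])
    show "inj_on (\<lambda>A. {0..<n} - A) (sat_t n t F)"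
      by (rule inj_onI) (auto simp: sat_t_def)
    show "(\<lambda>A. {0..<n} - A) ` sat_t n t F \<subseteq> {K. clq {0..<n} adj K \<and> card K = m}"
    proof
      fix B assume "B \<in> (\<lambda>A. {0..<n} - A) ` sat_t n t F"
      then obtain A where A: "A \<in> sat_t n t F" "B = {0..<n} - A" by auto
      have "clq {0..<n} adj B" using A by (auto simp: clq_def adj_def)
      moreover have "card B = m" using A m_def
        by (auto simp: sat_t_def card_Diff_subset finite_subset)
      ultimately show "B \<in> {K. clq {0..<n} adj K \<and> card K = m}" by simp
    qed
    show "finite {K. clq {0..<n} adj K \<and> card K = m}"
      by (rule finite_subset[of _ "Pow {0..<n}"]) (auto simp: clq_def)
  qed
  thus ?thesis using CCb m_def by simp
qed



lemma cls_card:
  assumes m0: "0 < m" and km: "k < m"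
  shows "card {i. i < n \<and> i mod m = k} = (if k < n mod m then n div m + 1 else n div m)"
proof -
  define q r where "q = n div m" and "r = n mod m"
  have n: "n = m*q + r" and rm: "r < m" using m0 by (simp_all add: q_def r_def)
  define c where "c = (if k < r then q + 1 else q)"
  have eq: "{i. i < n \<and> i mod m = k} = (\<lambda>j. k + m*j) ` {..<c}"
  proof (rule set_eqI, rule iffI)
    fix i assume i: "i \<in> {i. i < n \<and> i mod m = k}"
    hence ii: "i = k + m*(i div m)" using mult_div_mod_eq[of m i] by simp
    have "i div m < c"
    proof (cases "k < r")
      case True
      have "i div m \<le> n div m" using i div_le_mono by simp
      thus ?thesis using True by (simp add: c_def q_def)
    next
      case False
      show ?thesis
      proof (rule ccontr)
        assume "\<not> i div m < c"
        hence "q \<le> i div m" using False by (simp add: c_def)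
        hence "m*q \<le> m*(i div m)" by (rule mult_le_mono2)
        moreover have "i < n" using i by simp
        ultimately show False using ii n False by linarith
      qed
    qed
    thus "i \<in> (\<lambda>j. k + m*j) ` {..<c}" using ii by blast
  next
    fix i assume "i \<in> (\<lambda>j. k + m*j) ` {..<c}"
    then obtain j where j: "j < c" "i = k + m*j" by auto
    have "i mod m = k" using j km by simp
    moreover have "i < n"
    proof (cases "j < q")
      case True
      hence "j+1 \<le> q" by simp
      hence "m*(j+1) \<le> m*q" by (rule mult_le_mono2)
      thus ?thesis using j km n by (simp add: algebra_simps)
    next
      case False
      hence "j = q" "k < r" using j by (auto simp: c_def split: if_splits)
      thus ?thesis using j n by simp
    qed
    ultimately show "i \<in> {i. i < n \<and> i mod m = k}" by simp
  qed
  have "inj_on (\<lambda>j. k + m*j) {..<c}" using m0 by (auto simp: inj_on_def)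
  hence "card {i. i < n \<and> i mod m = k} = c" unfolding eq by (simp add: card_image)
  thus ?thesis by (simp add: c_def q_def r_def)
qed

lemma lower:
  assumes tn: "t < n"
  shows "\<exists>F. is_kcnf n 2 F \<and> admissible n t F \<and> fq n (n-t) \<le> card (sat_t n t F)"
proof -
  define m where "m = n - t"
  have m0: "0 < m" using tn m_def by simp
  define cls where "cls k = {i. i < n \<and> i mod m = k}" for k
  define F0 :: cnf where "F0 = {{(i,True),(j,True)} | i j. i < n \<and> j < n \<and> i \<noteq> j \<and> i mod m = j mod m}"
  have kc: "is_kcnf n 2 F0"
    unfolding is_kcnf_def F0_def by (auto simp: card_insert_if)
  have adm: "admissible n t F0"
    unfolding admissible_def
  proof (intro allI impI notI)
    fix A assume A: "A \<subseteq> {0..<n} \<and> card A < t" and sat: "cnf_sat A F0"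
    define B where "B = {0..<n} - A"
    have "finite A" using A finite_subset by blast
    hence "card B = n - card A" using A by (simp add: B_def card_Diff_subset)
    hence cB: "card B > m" using A m_def tn by linarith
    have "\<not> inj_on (\<lambda>i. i mod m) B"
    proof
      assume inj: "inj_on (\<lambda>i. i mod m) B"
      have "(\<lambda>i. i mod m) ` B \<subseteq> {0..<m}" using m0 by auto
      hence "card ((\<lambda>i. i mod m) ` B) \<le> m" using card_mono[of "{0..<m}"] by fastforce
      thus False using card_image[OF inj] cB by simp
    qed
    then obtain i j where ij: "i \<in> B" "j \<in> B" "i \<noteq> j" "i mod m = j mod m" by (auto simp: inj_on_def)
    have "{(i,True),(j,True)} \<in> F0" using ij by (auto simp: F0_def B_def)
    hence "clause_sat A {(i,True),(j,True)}" using sat by (simp add: cnf_sat_def)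
    thus False using ij by (auto simp: clause_sat_def lit_sat_def B_def)
  qed
  define P where "P = PiE {0..<m} cls"
  have cardP: "card P = fq n m"
  proof -
    have "card P = (\<Prod>k\<in>{0..<m}. card (cls k))" by (simp add: P_def card_PiE)
    also have "\<dots> = (\<Prod>k\<in>{0..<m}. (if k < n mod m then n div m + 1 else n div m))"
      by (rule prod.cong) (auto simp: cls_def cls_card[OF m0])
    also have "\<dots> = (\<Prod>k\<in>{0..<m} \<inter> {k. k < n mod m}. n div m + 1) * (\<Prod>k\<in>{0..<m} \<inter> - {k. k < n mod m}. n div m)"
      by (rule prod.If_cases) simp
    also have "{0..<m} \<inter> {k. k < n mod m} = {0..<n mod m}" using m0 mod_less_divisor[OF m0, of n] by auto
    also have "{0..<m} \<inter> - {k. k < n mod m} = {n mod m..<m}" by auto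
    finally show ?thesis by (simp add: fq_def mult.commute)
  qed
  define g where "g f = {0..<n} - f ` {0..<m}" for f :: "nat \<Rightarrow> nat"
  have Pprop: "f k < n \<and> f k mod m = k" if "f \<in> P" "k < m" for f k
    using that by (auto simp: P_def cls_def PiE_def Pi_def)
  have "card P \<le> card (sat_t n t F0)"
  proof (rule card_inj_on_le[of g])
    show "inj_on g P"
    proof (rule inj_onI)
      fix f1 f2 assume f: "f1 \<in> P" "f2 \<in> P" "g f1 = g f2"
      have s1: "f1 ` {0..<m} \<subseteq> {0..<n}" "f2 ` {0..<m} \<subseteq> {0..<n}" using Pprop f by auto
      have im: "f1 ` {0..<m} = f2 ` {0..<m}"
        using f(3) s1 unfolding g_def by (metis Diff_Diff_Int inf.absorb_iff2)
      show "f1 = f2"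
      proof (rule PiE_ext)
        show "f1 \<in> PiE {0..<m} cls" "f2 \<in> PiE {0..<m} cls" using f by (simp_all add: P_def)
        fix k assume k: "k \<in> {0..<m}"
        then obtain k' where k': "k' \<in> {0..<m}" "f1 k = f2 k'" using im by blast
        have "k' = k" using Pprop[OF f(1), of k] Pprop[OF f(2), of k'] k k' by simp
        thus "f1 k = f2 k" using k' by simp
      qed
    qed
    show "g ` P \<subseteq> sat_t n t F0"
    proof
      fix A assume "A \<in> g ` P"
      then obtain f where f: "f \<in> P" "A = g f" by auto
      have s: "f ` {0..<m} \<subseteq> {0..<n}" using Pprop f by auto
      have inj: "inj_on f {0..<m}"
        by (rule inj_onI) (metis Pprop f(1) atLeastLessThan_iff)
      have "card (f ` {0..<m}) = m" using card_image[OF inj] by simp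
      hence cA: "card A = t" using f s m_def tn by (simp add: g_def card_Diff_subset finite_subset)
      have "cnf_sat A F0"
        unfolding cnf_sat_def F0_def
      proof (safe)
        fix i j assume ij: "i < n" "j < n" "i \<noteq> j" "i mod m = j mod m"
        show "clause_sat A {(i, True), (j, True)}"
        proof (rule ccontr)
          assume "\<not> ?thesis"
          hence "i \<notin> A" "j \<notin> A" by (auto simp: clause_sat_def lit_sat_def)
          then obtain k k' where "k < m" "k' < m" "i = f k" "j = f k'" using ij f by (auto simp: g_def)
          thus False using Pprop[OF f(1)] ij by metis
        qed
      qed
      thus "A \<in> sat_t n t F0" using cA f by (auto simp: sat_t_def g_def)
    qed
    show "finite (sat_t n t F0)"
      by (rule finite_subset[of _ "Pow {0..<n}"]) (auto simp: sat_t_def)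
  qed
  thus ?thesis using kc adm cardP m_def by auto
qed


theorem theorem3:
  fixes n t :: nat
  assumes "1 \<le> n" and "t < n"
  shows "S n t 2 = (let q = n div (n - t); r = n mod (n - t)
                    in q ^ (n - t - r) * (q + 1) ^ r)"
proof -
  have rhs: "(let q = n div (n - t); r = n mod (n - t) in q ^ (n - t - r) * (q + 1) ^ r) = fq n (n-t)"
    by (simp add: fq_def Let_def)
  let ?X = "{card (sat_t n t F) | F. is_kcnf n 2 F \<and> admissible n t F}"
  have ub: "\<And>y. y \<in> ?X \<Longrightarrow> y \<le> fq n (n-t)" using upper[OF assms(2)] by auto
  obtain F0 where F0: "is_kcnf n 2 F0" "admissible n t F0" "fq n (n-t) \<le> card (sat_t n t F0)"
    using lower[OF assms(2)] by blast
  have "card (sat_t n t F0) \<in> ?X" using F0 by blast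
  hence "card (sat_t n t F0) = fq n (n-t)" using ub F0(3) le_antisym by blast
  hence mem: "fq n (n-t) \<in> ?X" using F0 by (metis (mono_tags, lifting) mem_Collect_eq)
  have fin: "finite ?X" by (rule finite_subset[of _ "{..fq n (n-t)}"]) (use ub in auto)
  have "Max ?X = fq n (n-t)" by (rule Max_eqI[OF fin ub mem])
  thus ?thesis unfolding S_def rhs .
qed

end
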